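(* Let $\mathbb{K}$ be any field and $n\geq 3$. Let $S$ be a linear subspace of $\mathrm{A}_n(\mathbb{K})$ in which every matrix has rank at most $2$. For $M\in S$ let $P(M)\in\mathrm{A}_{n-1}(\mathbb{K})$ be the upper-left $(n-1)\times(n-1)$ submatrix of $M$. Assume that $P(S)\subset\mathrm{WA}_{n-1,1,1}(\mathbb{K})$ and $\dim P(S)>1$. Then $S$ is congruent to a subspace of $\mathrm{WA}_{n,1,1}(\mathbb{K})$.
   Context: $\mathrm{A}_p(\mathbb{K})$ denotes the $p\times p$ alternating matrices (skew-symmetric, zero diagonal). $\mathrm{WA}_{p,1,1}(\mathbb{K})$ is the space of $M=(m_{i,j})\in\mathrm{A}_p(\mathbb{K})$ with $m_{i,j}=0$ whenever $i>1$ and $j>1$. Subsets $\mathcal{V},\mathcal{W}$ of $\mathrm{M}_n(\mathbb{K})$ are congruent if $\mathcal{V}=Q\mathcal{W}Q^T$ for some $Q\in\mathrm{GL}_n(\mathbb{K})$. *)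

theory Defs
  imports Jordan_Normal_Form.DL_Rank
begin

text \<open>Matrices are JNF matrices with 0-based indices; index 0 corresponds to the
  paper's index 1.\<close>

definition alt_mat :: "nat \<Rightarrow> 'a::field mat set" where
  "alt_mat p = {M \<in> carrier_mat p p. transpose_mat M = - M \<and> (\<forall>i<p. M $$ (i, i) = 0)}"

definition WA :: "nat \<Rightarrow> 'a::field mat set" where
  "WA p = {M \<in> alt_mat p. \<forall>i<p. \<forall>j<p. 0 < i \<longrightarrow> 0 < j \<longrightarrow> M $$ (i, j) = 0}"

definition upper_left :: "nat \<Rightarrow> 'a::field mat \<Rightarrow> 'a mat" where
  "upper_left n M = mat (n - 1) (n - 1) (\<lambda>(i, j). M $$ (i, j))"

definition congruent_sets :: "nat \<Rightarrow> 'a::field mat set \<Rightarrow> 'a mat set \<Rightarrow> bool" where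
  "congruent_sets n V W \<longleftrightarrow>
     (\<exists>Q \<in> carrier_mat n n. invertible_mat Q \<and> V = (\<lambda>M. Q * M * transpose_mat Q) ` W)"

end

theory Submission
  imports "Jordan_Normal_Form.DL_Rank_Submatrix" Defs
begin

hide_const (open) Real_Vector_Spaces.subspace


lemma dep_lemma:
  fixes u v w :: "nat \<Rightarrow> 'a::field"
  assumes "w k \<noteq> 0" "\<forall>j\<in>I. u j * w k = u k * w j" "\<forall>j\<in>I. v j * w k = v k * w j"
    "i \<in> I" "j \<in> I"
  shows "u i * v j = u j * v i"
proof -
  have 1: "u i * w k = u k * w i" "v i * w k = v k * w i" "u j * w k = u k * w j" "v j * w k = v k * w j"
    using assms by auto
  have "(u i * v j) * (w k * w k) = (u i * w k) * (v j * w k)" by (simp add: algebra_simps)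
  also have "\<dots> = (u k * w i) * (v k * w j)" using 1 by simp
  also have "\<dots> = (u j * w k) * (v i * w k)" using 1 by (simp add: algebra_simps)
  also have "\<dots> = (u j * v i) * (w k * w k)" by (simp add: algebra_simps)
  finally show ?thesis using assms(1) by simp
qed

lemma key_lemma:
  fixes a b :: "'m \<Rightarrow> nat \<Rightarrow> 'a::field"
  assumes add: "\<And>x y. x \<in> S \<Longrightarrow> y \<in> S \<Longrightarrow> p x y \<in> S \<and>
      (\<forall>k\<in>I. a (p x y) k = a x k + a y k \<and> b (p x y) k = b x k + b y k)"
    and H: "\<And>x i j. x \<in> S \<Longrightarrow> i \<in> I \<Longrightarrow> j \<in> I \<Longrightarrow> a x i * b x j = a x j * b x i"
    and x0: "x0 \<in> S" and y0: "y0 \<in> S" and i0: "i0 \<in> I" and j0: "j0 \<in> I"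
    and D: "a x0 i0 * a y0 j0 \<noteq> a x0 j0 * a y0 i0"
  shows "\<exists>l. \<forall>x\<in>S. \<forall>k\<in>I. b x k = l * a x k"
proof -
  have P: "a x i * b y j - a x j * b y i + (a y i * b x j - a y j * b x i) = 0"
    if "x \<in> S" "y \<in> S" "i \<in> I" "j \<in> I" for x y i j
  proof -
    have "a (p x y) i * b (p x y) j = a (p x y) j * b (p x y) i"
      using H add that by blast
    then have "(a x i + a y i) * (b x j + b y j) = (a x j + a y j) * (b x i + b y i)"
      using add that by simp
    then show ?thesis using H[of x i j] H[of y i j] that by (simp add: algebra_simps)
  qed
  define kk where "kk x = (SOME k. k \<in> I \<and> a x k \<noteq> 0)" for x
  define lam where "lam x = b x (kk x) / a x (kk x)" for x
  have lamE: "b x j = lam x * a x j" if "x \<in> S" "k \<in> I" "a x k \<noteq> 0" "j \<in> I" for x k j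
  proof -
    have kk: "kk x \<in> I \<and> a x (kk x) \<noteq> 0" unfolding kk_def using that by (metis (mono_tags, lifting) someI)
    have "a x (kk x) * b x j = a x j * b x (kk x)" using H that kk by blast
    then show ?thesis unfolding lam_def using kk by (simp add: field_simps)
  qed
  have E: "lam x = lam y" if "x \<in> S" "y \<in> S" "k \<in> I" "a x k \<noteq> 0" "k' \<in> I" "a y k' \<noteq> 0"
      "i \<in> I" "j \<in> I" "a x i * a y j \<noteq> a x j * a y i" for x y k k' i j
  proof -
    have "a x i * (lam y * a y j) - a x j * (lam y * a y i) + (a y i * (lam x * a x j) - a y j * (lam x * a x i)) = 0"
      using P[of x y i j] lamE[of x k] lamE[of y k'] that by simp
    then have "(lam y - lam x) * (a x i * a y j - a x j * a y i) = 0" by (simp add: algebra_simps)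
    then show ?thesis using that by simp
  qed
  have nz: "\<exists>k\<in>I. a x k \<noteq> 0" if "x \<in> S" "i \<in> I" "j \<in> I" "a x i * a y j \<noteq> a x j * a y i" for x y i j
    using that by (cases "a x i = 0") auto
  have nz2: "\<exists>k\<in>I. a y k \<noteq> 0" if "y \<in> S" "i \<in> I" "j \<in> I" "a x i * a y j \<noteq> a x j * a y i" for x y i j
    using that by (cases "a y i = 0") auto
  obtain kx where kx: "kx \<in> I" "a x0 kx \<noteq> 0" using nz[OF x0 i0 j0 D] by blast
  obtain ky where ky: "ky \<in> I" "a y0 ky \<noteq> 0" using nz2[OF y0 i0 j0 D] by blast
  have lxy: "lam x0 = lam y0" using E[OF x0 y0 kx ky i0 j0 D] .
  show ?thesis
  proof (intro exI ballI)
    fix x k assume x: "x \<in> S" and k: "k \<in> I"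
    show "b x k = lam x0 * a x k"
    proof (cases "\<exists>k\<in>I. a x k \<noteq> 0")
      case True
      then obtain k1 where k1: "k1 \<in> I" "a x k1 \<noteq> 0" by blast
      have "lam x = lam x0"
      proof (cases "\<exists>i\<in>I. \<exists>j\<in>I. a x i * a x0 j \<noteq> a x j * a x0 i")
        case True
        then show ?thesis using E[OF x x0 k1 kx] by blast
      next
        case F1: False
        show ?thesis
        proof (cases "\<exists>i\<in>I. \<exists>j\<in>I. a x i * a y0 j \<noteq> a x j * a y0 i")
          case True
          then show ?thesis using E[OF x y0 k1 ky] lxy by metis
        next
          case False
          have "a x0 i0 * a y0 j0 = a x0 j0 * a y0 i0"
            apply (rule dep_lemma[of "a x" k1 I "a x0" "a y0"])
            using F1 False k1 i0 j0 by (auto simp: mult.commute)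
          then show ?thesis using D by blast
        qed
      qed
      then show ?thesis using lamE[OF x k1(1) k1(2) k] by simp
    next
      case False
      have "b x k = 0"
      proof (rule ccontr)
        assume bk: "b x k \<noteq> 0"
        have "\<forall>j\<in>I. a y j * b x k = a y k * b x j" if "y \<in> S" for y
          using P[OF x that] False k by (auto simp: algebra_simps)
        then have "a x0 i0 * a y0 j0 = a x0 j0 * a y0 i0"
          using dep_lemma[of "b x" k I "a x0" "a y0"] bk x0 y0 i0 j0 by blast
        then show False using D by blast
      qed
      then show ?thesis using False k by auto
    qed
  qed
qed


lemma det1: "det (mat 1 1 f) = (f(0,0)::'a::comm_ring_1)"
  by (subst laplace_expansion_row[of _ 1 0]) (auto simp: cofactor_def mat_delete_def)
lemma det2: "det (mat 2 2 f) = (f(0,0)::'a::comm_ring_1)*f(1,1) - f(0,1)*f(1,0)"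
  apply (subst laplace_expansion_row[of _ 2 0]) 
  apply (auto simp: cofactor_def numeral_2_eq_2 mat_delete_def insert_index_def det1[unfolded One_nat_def] lessThan_Suc)
  done
lemma det3: "det (mat 3 3 f) = (f(0,0)::'a::comm_ring_1)*(f(1,1)*f(2,2) - f(1,2)*f(2,1))
   - f(0,1)*(f(1,0)*f(2,2) - f(1,2)*f(2,0)) + f(0,2)*(f(1,0)*f(2,1) - f(1,1)*f(2,0))"
  apply (subst laplace_expansion_row[of _ 3 0]) 
  apply (auto simp: cofactor_def numeral_3_eq_3 mat_delete_def insert_index_def lessThan_Suc)
  apply (subst (1 2 3) det2[unfolded numeral_2_eq_2])
  apply (simp add: numeral_2_eq_2 algebra_simps)
  done

lemma pick3:
  assumes "r0 < r1" "r1 < (r2::nat)"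
  shows "pick {r0,r1,r2} 0 = r0" "pick {r0,r1,r2} (Suc 0) = r1" "pick {r0,r1,r2} 2 = r2"
proof -
  have e1: "{a\<in>{r0,r1,r2}. a < r0} = {}" using assms by auto
  have p: "\<And>x. x \<in> {r0,r1,r2} \<Longrightarrow> pick {r0,r1,r2} (card {a\<in>{r0,r1,r2}. a < x}) = x"
    by (rule pick_card_in_set)
  show "pick {r0,r1,r2} 0 = r0" using p[of r0] unfolding e1 by simp
  have e2: "{a\<in>{r0,r1,r2}. a < r1} = {r0}" using assms by auto
  show "pick {r0,r1,r2} (Suc 0) = r1" using p[of r1] unfolding e2 by simp
  have e3: "{a\<in>{r0,r1,r2}. a < r2} = {r0,r1}" using assms by auto
  have "card {r0,r1} = 2" using assms by simp
  then show "pick {r0,r1,r2} 2 = r2" using p[of r2] unfolding e3 by simp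
qed

lemma card3: assumes "r0 < r1" "r1 < (r2::nat)" "r2 < n"
  shows "card {i. i < n \<and> i \<in> {r0,r1,r2}} = 3"
proof -
  have "{i. i < n \<and> i \<in> {r0,r1,r2}} = {r0,r1,r2}" using assms by auto
  then show ?thesis using assms by simp
qed

lemma rank3:
  fixes A :: "'a::field mat"
  assumes A: "A \<in> carrier_mat n n" and r: "r0<r1" "r1<r2" "r2<n" and c: "c0<c1" "c1<c2" "c2<n"
    and d: "det (mat 3 3 (\<lambda>(i,j). A $$ ([r0,r1,r2]!i, [c0,c1,c2]!j))) \<noteq> 0"
  shows "3 \<le> vec_space.rank n A"
proof -
  have "submatrix A {r0,r1,r2} {c0,c1,c2} = mat 3 3 (\<lambda>(i,j). A $$ ([r0,r1,r2]!i, [c0,c1,c2]!j))"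
  proof -
    have dr: "card {i. i < dim_row A \<and> i \<in> {r0,r1,r2}} = 3" "card {i. i < dim_col A \<and> i \<in> {c0,c1,c2}} = 3"
      using card3[OF r] card3[OF c] A by auto
    show ?thesis unfolding submatrix_def dr
    proof (rule eq_matI)
      fix i j assume ij: "i < dim_row (mat 3 3 (\<lambda>(i,j). A $$ ([r0,r1,r2]!i, [c0,c1,c2]!j)))"
        "j < dim_col (mat 3 3 (\<lambda>(i,j). A $$ ([r0,r1,r2]!i, [c0,c1,c2]!j)))"
      have i3: "i = 0 \<or> i = 1 \<or> i = 2" "j = 0 \<or> j = 1 \<or> j = 2" using ij by auto
      show "mat 3 3 (\<lambda>(i, j). A $$ (pick {r0, r1, r2} i, pick {c0, c1, c2} j)) $$ (i, j) =
          mat 3 3 (\<lambda>(i,j). A $$ ([r0,r1,r2]!i, [c0,c1,c2]!j)) $$ (i, j)"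
        using i3 ij by (auto simp del: pick.simps simp: pick3[OF r(1,2)] pick3[OF c(1,2)])
    qed auto
  qed
  then have "card {j. j < n \<and> j \<in> {c0,c1,c2}} \<le> vec_space.rank n A"
    using vec_space.rank_gt_minor[OF A] d by metis
  then show ?thesis using card3[OF c] by simp
qed

lemma pf_cond:
  fixes M :: "'a::field mat"
  assumes M: "M \<in> carrier_mat n n" and sk: "\<And>i j. i<n \<Longrightarrow> j<n \<Longrightarrow> M$$(j,i) = - M$$(i,j)"
    and dg: "\<And>i. i<n \<Longrightarrow> M$$(i,i) = 0"
    and blk: "\<And>i j. 0<i \<Longrightarrow> i<n-1 \<Longrightarrow> 0<j \<Longrightarrow> j<n-1 \<Longrightarrow> M$$(i,j) = 0"
    and rk: "vec_space.rank n M \<le> 2"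
    and ij: "0<i" "i<j" "j<n-1"
  shows "M$$(0,i)*M$$(j,n-1) = M$$(0,j)*M$$(i,n-1)"
proof -
  define z where "z = n - 1"
  have zl: "z < n" "0 < z" "i < z" "j < z" using ij unfolding z_def by auto
  have "M$$(0,i)*M$$(j,z) = M$$(0,j)*M$$(i,z)"
proof (rule ccontr)
  define D where "D = M$$(0,i)*M$$(j,z) - M$$(0,j)*M$$(i,z)"
  assume "\<not> ?thesis"
  then have D: "D \<noteq> 0" unfolding D_def by simp
  have f: "M$$(i,0) = - M$$(0,i)" "M$$(j,0) = - M$$(0,j)" "M$$(z,i) = - M$$(i,z)"
    "M$$(z,j) = - M$$(j,z)" "M$$(z,0) = - M$$(0,z)"
    "M$$(0,0) = 0" "M$$(i,i) = 0" "M$$(j,j) = 0" "M$$(z,z) = 0"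
    "M$$(i,j) = 0" "M$$(j,i) = 0"
    using sk[of 0 i] sk[of 0 j] sk[of i z] sk[of j z] sk[of 0 z] dg[of 0] dg[of i] dg[of j] dg[of z]
      blk[of i j] blk[of j i] ij zl unfolding z_def by auto
  have d1: "det (mat 3 3 (\<lambda>(r,c). M $$ ([0,i,z]!r, [0,i,j]!c))) = - M$$(0,i) * D"
    unfolding det3 by (simp add: numeral_2_eq_2 f D_def algebra_simps)
  have d2: "det (mat 3 3 (\<lambda>(r,c). M $$ ([0,j,z]!r, [0,i,j]!c))) = - M$$(0,j) * D"
    unfolding det3 by (simp add: numeral_2_eq_2 f D_def algebra_simps)
  have d3: "det (mat 3 3 (\<lambda>(r,c). M $$ ([0,i,z]!r, [i,j,z]!c))) = M$$(i,z) * D"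
    unfolding det3 by (simp add: numeral_2_eq_2 f D_def algebra_simps)
  have d4: "det (mat 3 3 (\<lambda>(r,c). M $$ ([0,j,z]!r, [i,j,z]!c))) = M$$(j,z) * D"
    unfolding det3 by (simp add: numeral_2_eq_2 f D_def algebra_simps)
  have o: "(0::nat) < i" "i < z" "z < n" "(0::nat) < j" "j < z" "i < j" "j < n" using ij zl by auto
  have z1: "M$$(0,i) = 0"
  proof (rule ccontr)
    assume "M$$(0,i) \<noteq> 0"
    then have "det (mat 3 3 (\<lambda>(r,c). M $$ ([0,i,z]!r, [0,i,j]!c))) \<noteq> 0" using d1 D by simp
    from rank3[OF M o(1,2,3) o(1,6,7) this] rk show False by simp
  qed
  have z2: "M$$(0,j) = 0"
  proof (rule ccontr)
    assume "M$$(0,j) \<noteq> 0"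
    then have "det (mat 3 3 (\<lambda>(r,c). M $$ ([0,j,z]!r, [0,i,j]!c))) \<noteq> 0" using d2 D by simp
    from rank3[OF M o(4,5,3) o(1,6,7) this] rk show False by simp
  qed
  have z3: "M$$(i,z) = 0"
  proof (rule ccontr)
    assume "M$$(i,z) \<noteq> 0"
    then have "det (mat 3 3 (\<lambda>(r,c). M $$ ([0,i,z]!r, [i,j,z]!c))) \<noteq> 0" using d3 D by simp
    from rank3[OF M o(1,2,3) o(6,5,3) this] rk show False by simp
  qed
  have z4: "M$$(j,z) = 0"
  proof (rule ccontr)
    assume "M$$(j,z) \<noteq> 0"
    then have "det (mat 3 3 (\<lambda>(r,c). M $$ ([0,j,z]!r, [i,j,z]!c))) \<noteq> 0" using d4 D by simp
    from rank3[OF M o(4,5,3) o(6,5,3) this] rk show False by simp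
  qed
  note z = z1 z2 z3 z4
  then show False using D unfolding D_def by simp
qed


  then show ?thesis unfolding z_def .
qed



definition Qm :: "nat \<Rightarrow> 'a::field \<Rightarrow> 'a mat" where
  "Qm n l = mat n n (\<lambda>(i,j). if i = j then 1 else if i = n-1 \<and> j = 0 then l else 0)"

lemma Qm_carrier[simp]: "Qm n l \<in> carrier_mat n n" unfolding Qm_def by simp
lemma Qm_dims[simp]: "dim_row (Qm n l) = n" "dim_col (Qm n l) = n" unfolding Qm_def by simp_all

lemma Qm_mult:
  assumes A: "A \<in> carrier_mat n m" and n: "2 \<le> n" and i: "i < n" and j: "j < m"
  shows "(Qm n l * A) $$ (i,j) = A$$(i,j) + (if i = n-1 then l * A$$(0,j) else 0)"
proof -
  have "(Qm n l * A) $$ (i,j) = (\<Sum>k\<in>{0..<n}. Qm n l $$ (i,k) * A $$ (k,j))"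
    using A i j by (simp add: scalar_prod_def Qm_def)
  also have "\<dots> = (\<Sum>k\<in>{0..<n}. (if k = i then A$$(k,j) else 0) + (if i = n-1 \<and> k = 0 then l * A$$(k,j) else 0))"
    using n i by (intro sum.cong) (auto simp: Qm_def)
  also have "\<dots> = A$$(i,j) + (if i = n-1 then l * A$$(0,j) else 0)"
    using n i by (simp add: sum.distrib)
  finally show ?thesis .
qed

lemma mult_QmT:
  assumes A: "A \<in> carrier_mat m n" and n: "2 \<le> n" and i: "i < m" and j: "j < n"
  shows "(A * (Qm n l)\<^sup>T) $$ (i,j) = A$$(i,j) + (if j = n-1 then l * A$$(i,0) else 0)"
proof -
  have "(A * (Qm n l)\<^sup>T) $$ (i,j) = (\<Sum>k\<in>{0..<n}. A $$ (i,k) * Qm n l $$ (j,k))"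
    using A i j by (simp add: scalar_prod_def Qm_def)
  also have "\<dots> = (\<Sum>k\<in>{0..<n}. (if k = j then A$$(i,k) else 0) + (if j = n-1 \<and> k = 0 then l * A$$(i,k) else 0))"
    using n j by (intro sum.cong) (auto simp: Qm_def)
  also have "\<dots> = A$$(i,j) + (if j = n-1 then l * A$$(i,0) else 0)"
    using n j by (simp add: sum.distrib)
  finally show ?thesis .
qed

lemma conj_formula:
  assumes A: "A \<in> carrier_mat n n" and n: "2 \<le> n" and i: "i < n" and j: "j < n"
  shows "(Qm n l * A * (Qm n l)\<^sup>T) $$ (i,j) = A$$(i,j) + (if i = n-1 then l * A$$(0,j) else 0)
     + (if j = n-1 then l * A$$(i,0) else 0) + (if i = n-1 \<and> j = n-1 then l*l*A$$(0,0) else 0)"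
proof -
  have QA: "Qm n l * A \<in> carrier_mat n n" using mult_carrier_mat[OF Qm_carrier A] .
  have n0: "0 < n" using n by simp
  show ?thesis
    unfolding mult_QmT[OF QA n i j] Qm_mult[OF A n i j] Qm_mult[OF A n i n0] using n
    by (auto simp: algebra_simps)
qed

lemma conj_carrier[simp]: "A \<in> carrier_mat n n \<Longrightarrow> Qm n l * A * (Qm n l)\<^sup>T \<in> carrier_mat n n"
  by (rule mult_carrier_mat[OF mult_carrier_mat[OF Qm_carrier]]) (auto intro: transpose_carrier_mat)

lemma conj_inv:
  assumes A: "A \<in> carrier_mat n n" and n: "2 \<le> n"
  shows "Qm n (-l) * (Qm n l * A * (Qm n l)\<^sup>T) * (Qm n (-l))\<^sup>T = A"
proof (rule eq_matI)
  fix i j assume "i < dim_row A" "j < dim_col A"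
  then have i: "i < n" and j: "j < n" using A by auto
  have B: "Qm n l * A * (Qm n l)\<^sup>T \<in> carrier_mat n n" using A by (rule conj_carrier)
  have n0: "0 < n" "0 \<noteq> n - 1" using n by auto
  show "(Qm n (-l) * (Qm n l * A * (Qm n l)\<^sup>T) * (Qm n (-l))\<^sup>T) $$ (i,j) = A $$ (i,j)"
    unfolding conj_formula[OF B n i j] conj_formula[OF A n i j] conj_formula[OF A n n0(1) j]
      conj_formula[OF A n i n0(1)] conj_formula[OF A n n0(1) n0(1)] conj_formula[OF B n n0(1) j]
      conj_formula[OF B n i n0(1)] conj_formula[OF B n n0(1) n0(1)]
    using n0 by (auto simp: algebra_simps)
qed (use A in auto)

lemma Qm_inv: assumes n: "2 \<le> n" shows "Qm n (-l) * Qm n l = 1\<^sub>m n"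
proof (rule eq_matI)
  fix i j assume "i < dim_row (1\<^sub>m n)" "j < dim_col (1\<^sub>m n)"
  then have i: "i < n" and j: "j < n" by auto
  show "(Qm n (-l) * Qm n l) $$ (i,j) = 1\<^sub>m n $$ (i,j)"
    unfolding Qm_mult[OF Qm_carrier n i j] using i j n by (auto simp: Qm_def)
qed auto

lemma Qm_invertible: assumes n: "2 \<le> n" shows "invertible_mat (Qm n l)"
  unfolding invertible_mat_def inverts_mat_def using Qm_inv[OF n, of l] Qm_inv[OF n, of "-l"]
  by (intro conjI exI[of _ "Qm n (-l)"]) (auto simp: square_mat.simps)



lemma subspace_facts:
  fixes S :: "'a::field mat set"
  assumes S: "subspace class_ring S (module_mat TYPE('a) n n)"
  shows "S \<subseteq> carrier_mat n n" "\<And>A B. A \<in> S \<Longrightarrow> B \<in> S \<Longrightarrow> A + B \<in> S"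
    "\<And>c A. A \<in> S \<Longrightarrow> c \<cdot>\<^sub>m A \<in> S" "0\<^sub>m n n \<in> S"
proof -
  have sm: "LinearCombinations.submodule class_ring S (module_mat TYPE('a) n n)" using S by (simp add: VectorSpace.subspace_def)
  show "S \<subseteq> carrier_mat n n" using LinearCombinations.submodule.subset[OF sm] by (simp add: module_mat_simps)
  show "\<And>A B. A \<in> S \<Longrightarrow> B \<in> S \<Longrightarrow> A + B \<in> S" using LinearCombinations.submodule.m_closed[OF sm] by (simp add: module_mat_simps)
  show "\<And>c A. A \<in> S \<Longrightarrow> c \<cdot>\<^sub>m A \<in> S" using LinearCombinations.submodule.smult_closed[OF sm] by (simp add: module_mat_simps class_ring_simps)
  show "0\<^sub>m n n \<in> S" using LinearCombinations.submodule.zero_closed[OF sm] by (simp add: module_mat_simps)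
qed

lemma subspace_image:
  fixes f :: "'a::field mat \<Rightarrow> 'a mat"
  assumes S: "subspace class_ring S (module_mat TYPE('a) n n)"
    and fc: "\<And>A. A \<in> carrier_mat n n \<Longrightarrow> f A \<in> carrier_mat m m"
    and fadd: "\<And>A B. A \<in> carrier_mat n n \<Longrightarrow> B \<in> carrier_mat n n \<Longrightarrow> f (A + B) = f A + f B"
    and fsm: "\<And>c A. A \<in> carrier_mat n n \<Longrightarrow> f (c \<cdot>\<^sub>m A) = c \<cdot>\<^sub>m f A"
    and f0: "f (0\<^sub>m n n) = 0\<^sub>m m m"
  shows "subspace class_ring (f ` S) (module_mat TYPE('a) m m)"
proof -
  note sf = subspace_facts[OF S]
  have vs: "vectorspace class_ring (module_mat TYPE('a) m m)" by (rule matrix_vs)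
  have md: "Module.module class_ring (module_mat TYPE('a) m m)" using vs by (simp add: vectorspace_def)
  have "LinearCombinations.submodule class_ring (f ` S) (module_mat TYPE('a) m m)"
  proof (rule LinearCombinations.submodule.intro[OF md])
    show "f ` S \<subseteq> carrier (module_mat TYPE('a) m m)" using sf fc by (auto simp: module_mat_simps)
    show "\<And>v w. v \<in> f ` S \<Longrightarrow> w \<in> f ` S \<Longrightarrow> v \<oplus>\<^bsub>module_mat TYPE('a) m m\<^esub> w \<in> f ` S"
    proof -
      fix v w assume "v \<in> f ` S" "w \<in> f ` S"
      then obtain A B where "A \<in> S" "B \<in> S" "v = f A" "w = f B" by blast
      moreover have AB: "A + B \<in> S" using sf(2) \<open>A \<in> S\<close> \<open>B \<in> S\<close> by blast
      moreover have "f (A + B) = f A + f B" using fadd sf(1) \<open>A \<in> S\<close> \<open>B \<in> S\<close> by blast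
      ultimately show "v \<oplus>\<^bsub>module_mat TYPE('a) m m\<^esub> w \<in> f ` S"
        by (simp add: module_mat_simps) (metis image_eqI)
    qed
    show "\<zero>\<^bsub>module_mat TYPE('a) m m\<^esub> \<in> f ` S" using sf(4) f0 by (simp add: module_mat_simps) (metis image_eqI)
    show "\<And>c v. c \<in> carrier class_ring \<Longrightarrow> v \<in> f ` S \<Longrightarrow> c \<odot>\<^bsub>module_mat TYPE('a) m m\<^esub> v \<in> f ` S"
    proof -
      fix c v assume "v \<in> f ` S"
      then obtain A where "A \<in> S" "v = f A" by blast
      then show "c \<odot>\<^bsub>module_mat TYPE('a) m m\<^esub> v \<in> f ` S"
        using fsm sf by (auto simp: module_mat_simps intro!: image_eqI[of _ f "c \<cdot>\<^sub>m A"])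
    qed
  qed
  then show ?thesis using vs by (simp add: VectorSpace.subspace_def)
qed

lemma dim_le1:
  fixes W :: "'a::field mat set"
  assumes W: "subspace class_ring W (module_mat TYPE('a) m m)" and v: "v \<in> W"
    and gen: "\<And>w. w \<in> W \<Longrightarrow> \<exists>t. w = t \<cdot>\<^sub>m v"
  shows "vectorspace.dim class_ring ((module_mat TYPE('a) m m)\<lparr>carrier := W\<rparr>) \<le> 1"
proof -
  let ?V = "(module_mat TYPE('a) m m)\<lparr>carrier := W\<rparr>"
  have vs: "vectorspace class_ring ?V" using vectorspace.subspace_is_vs[OF matrix_vs W] .
  interpret V: vectorspace class_ring ?V by (rule vs)
  have vW: "{v} \<subseteq> carrier ?V" using v by simp
  have "V.span {v} = W"
  proof
    show "V.span {v} \<subseteq> W" using V.span_is_subset2[OF vW] by simp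
    show "W \<subseteq> V.span {v}"
    proof
      fix w assume "w \<in> W"
      then obtain t where t: "w = t \<cdot>\<^sub>m v" using gen by blast
      have sub: "LinearCombinations.submodule class_ring (V.span {v}) ?V" by (rule V.span_is_submodule[OF vW])
      have "v \<in> V.span {v}" using V.in_own_span[OF vW] by simp
      then have "t \<odot>\<^bsub>?V\<^esub> v \<in> V.span {v}" using LinearCombinations.submodule.smult_closed[OF sub, of t v]
        by (simp add: class_ring_simps)
      then show "w \<in> V.span {v}" using t by (simp add: module_mat_simps)
    qed
  qed
  then show ?thesis using V.dim_le1I[of v] v by simp
qed



lemma conj_entries:
  fixes M :: "'a::field mat"
  assumes M: "M \<in> carrier_mat n n" and n: "2 \<le> n" and z: "n = Suc z"
    and skA: "\<forall>i<n. \<forall>j<n. M$$(j,i) = - M$$(i,j)"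
    and dgA: "\<forall>i<n. M$$(i,i) = 0"
    and blkA: "\<forall>i j. 0<i \<longrightarrow> i<z \<longrightarrow> 0<j \<longrightarrow> j<z \<longrightarrow> M$$(i,j) = 0"
    and blA: "\<forall>k. 0<k \<longrightarrow> k<z \<longrightarrow> M$$(k,z) = l * M$$(0,k)"
    and i: "i < n" and j: "j < n"
  shows "(Qm n l * M * (Qm n l)\<^sup>T) $$ (j,i) = - (Qm n l * M * (Qm n l)\<^sup>T) $$ (i,j)"
    "(Qm n l * M * (Qm n l)\<^sup>T) $$ (i,i) = 0"
    "0 < i \<Longrightarrow> 0 < j \<Longrightarrow> (Qm n l * M * (Qm n l)\<^sup>T) $$ (i,j) = 0"
proof -
  have sk: "\<And>i j. i<n \<Longrightarrow> j<n \<Longrightarrow> M$$(j,i) = - M$$(i,j)" using skA by blast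
  have dg: "\<And>i. i<n \<Longrightarrow> M$$(i,i) = 0" using dgA by blast
  have blk: "\<And>i j. 0<i \<Longrightarrow> i<z \<Longrightarrow> 0<j \<Longrightarrow> j<z \<Longrightarrow> M$$(i,j) = 0" using blkA by blast
  have bl: "\<And>k. 0<k \<Longrightarrow> k<z \<Longrightarrow> M$$(k,z) = l * M$$(0,k)" using blA by blast
  have z0: "0 < n" "0 < z" "z < n" using n z by auto
  have s0: "M$$(j,0) = - M$$(0,j)" "M$$(i,0) = - M$$(0,i)" "M$$(0,0) = 0" "M$$(i,i) = 0"
    using sk[OF z0(1) j] sk[OF z0(1) i] dg[OF z0(1)] dg[OF i] by auto
  show diag: "(Qm n l * M * (Qm n l)\<^sup>T) $$ (i,i) = 0"
    unfolding conj_formula[OF M n i i] using s0 z by auto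
  show "(Qm n l * M * (Qm n l)\<^sup>T) $$ (j,i) = - (Qm n l * M * (Qm n l)\<^sup>T) $$ (i,j)"
  proof (cases "i = j")
    case True
    then show ?thesis using diag by simp
  next
    case False
    have e: "M$$(j,i) = - M$$(i,j)" using sk[OF i j] .
    show ?thesis
    proof (cases "i = z")
      case True
      then have "j \<noteq> z" using False by simp
      then show ?thesis unfolding conj_formula[OF M n i j] conj_formula[OF M n j i]
        using s0 z e True by simp
    next
      case F: False
      show ?thesis unfolding conj_formula[OF M n i j] conj_formula[OF M n j i]
        using s0 z e F by (cases "j = z") simp_all
    qed
  qed
  assume ip: "0 < i" and jp: "0 < j"
  show "(Qm n l * M * (Qm n l)\<^sup>T) $$ (i,j) = 0"
  proof (cases "i = z")
    case True
    show ?thesis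
    proof (cases "j = z")
      case True
      then show ?thesis using \<open>i = z\<close> unfolding conj_formula[OF M n i j] using s0 z by auto
    next
      case False
      then have jz: "j < z" using j z by auto
      have "M$$(z,j) = - M$$(j,z)" using sk[OF z0(3) j] by simp
      then show ?thesis using \<open>i = z\<close> False bl[OF jp jz] unfolding conj_formula[OF M n i j] using z jp by auto
    qed
  next
    case False
    then have iz: "i < z" using i z by auto
    show ?thesis
    proof (cases "j = z")
      case True
      then show ?thesis using False bl[OF ip iz] s0 unfolding conj_formula[OF M n i j] using z ip by auto
    next
      case F2: False
      then have jz: "j < z" using j z by auto
      show ?thesis using False F2 blk[OF ip iz jp jz] unfolding conj_formula[OF M n i j] using z by auto
    qed
  qed
qed

lemma conj_add:
  fixes A B :: "'a::field mat"
  assumes "A \<in> carrier_mat n n" "B \<in> carrier_mat n n" "2 \<le> n"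
  shows "Qm n l * (A + B) * (Qm n l)\<^sup>T = Qm n l * A * (Qm n l)\<^sup>T + Qm n l * B * (Qm n l)\<^sup>T"
proof (rule eq_matI)
  have AB: "A + B \<in> carrier_mat n n" using assms by simp
  fix i j assume "i < dim_row (Qm n l * A * (Qm n l)\<^sup>T + Qm n l * B * (Qm n l)\<^sup>T)"
    "j < dim_col (Qm n l * A * (Qm n l)\<^sup>T + Qm n l * B * (Qm n l)\<^sup>T)"
  then have i: "i < n" and j: "j < n" by auto
  have n0: "0 < n" using assms by auto
  show "(Qm n l * (A + B) * (Qm n l)\<^sup>T) $$ (i,j) = (Qm n l * A * (Qm n l)\<^sup>T + Qm n l * B * (Qm n l)\<^sup>T) $$ (i,j)"
    using conj_formula[OF AB assms(3) i j] conj_formula[OF assms(1) assms(3) i j] conj_formula[OF assms(2) assms(3) i j]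
      i j n0 assms by (auto simp: algebra_simps)
qed auto

lemma conj_smult:
  fixes A :: "'a::field mat"
  assumes "A \<in> carrier_mat n n" "2 \<le> n"
  shows "Qm n l * (c \<cdot>\<^sub>m A) * (Qm n l)\<^sup>T = c \<cdot>\<^sub>m (Qm n l * A * (Qm n l)\<^sup>T)"
proof (rule eq_matI)
  have cA: "c \<cdot>\<^sub>m A \<in> carrier_mat n n" using assms by simp
  fix i j assume "i < dim_row (c \<cdot>\<^sub>m (Qm n l * A * (Qm n l)\<^sup>T))" "j < dim_col (c \<cdot>\<^sub>m (Qm n l * A * (Qm n l)\<^sup>T))"
  then have i: "i < n" and j: "j < n" by auto
  have n0: "0 < n" using assms by auto
  show "(Qm n l * (c \<cdot>\<^sub>m A) * (Qm n l)\<^sup>T) $$ (i,j) = (c \<cdot>\<^sub>m (Qm n l * A * (Qm n l)\<^sup>T)) $$ (i,j)"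
    using conj_formula[OF cA assms(2) i j] conj_formula[OF assms(1) assms(2) i j]
      i j n0 assms by (auto simp: algebra_simps)
qed auto

lemma conj_zero:
  assumes "2 \<le> n"
  shows "Qm n l * (0\<^sub>m n n) * (Qm n l)\<^sup>T = (0\<^sub>m n n :: 'a::field mat)"
proof (rule eq_matI)
  fix i j assume "i < dim_row (0\<^sub>m n n :: 'a mat)" "j < dim_col (0\<^sub>m n n :: 'a mat)"
  then have i: "i < n" and j: "j < n" by auto
  have n0: "0 < n" using assms by auto
  show "(Qm n l * (0\<^sub>m n n) * (Qm n l)\<^sup>T) $$ (i,j) = (0\<^sub>m n n :: 'a mat) $$ (i,j)"
    using conj_formula[OF zero_carrier_mat assms i j] i j n0 by auto
qed auto



theorem lemma4p6:
  fixes S :: "'a::field mat set" and n :: nat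
  assumes "n \<ge> 3"
    and "subspace class_ring S (module_mat TYPE('a) n n)"
    and "S \<subseteq> alt_mat n"
    and "\<forall>M \<in> S. vec_space.rank n M \<le> 2"
    and "upper_left n ` S \<subseteq> WA (n - 1)"
    and "vectorspace.dim class_ring
           ((module_mat TYPE('a) (n - 1) (n - 1))\<lparr>carrier := upper_left n ` S\<rparr>) > 1"
  shows "\<exists>T. subspace class_ring T (module_mat TYPE('a) n n) \<and> T \<subseteq> WA n \<and>
             congruent_sets n S T"
proof -
  have n2: "2 \<le> n" using assms(1) by simp
  obtain z where z: "n = Suc z" using assms(1) by (cases n) auto
  have zn: "n - 1 = z" using z by simp
  have zz: "0 < z" "z < n" using z assms(1) by auto
  note sf = subspace_facts[OF assms(2)]
  have car: "\<And>M. M \<in> S \<Longrightarrow> M \<in> carrier_mat n n" using sf(1) by blast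
  have sk: "\<And>i j. i<n \<Longrightarrow> j<n \<Longrightarrow> M$$(j,i) = - M$$(i,j)" if M: "M \<in> S" for M
  proof -
    fix i j assume ij: "i<n" "j<n"
    have "M \<in> alt_mat n" using assms(3) M by blast
    then have tr: "transpose_mat M = - M" and Mc: "M \<in> carrier_mat n n" unfolding alt_mat_def by auto
    then have "transpose_mat M $$ (i,j) = (- M) $$ (i,j)" by simp
    then show "M$$(j,i) = - M$$(i,j)" using ij Mc by simp
  qed
  have dg: "\<And>i. i<n \<Longrightarrow> M$$(i,i) = 0" if M: "M \<in> S" for M
    using assms(3) M unfolding alt_mat_def by blast
  have ul: "upper_left n M $$ (i,j) = M$$(i,j)" if "i < z" "j < z" for M i j
    using that unfolding upper_left_def zn by simp
  have blk: "\<And>i j. 0<i \<Longrightarrow> i<z \<Longrightarrow> 0<j \<Longrightarrow> j<z \<Longrightarrow> M$$(i,j) = 0" if M: "M \<in> S" for M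
  proof -
    fix i j assume h: "0<i" "i<z" "0<j" "j<z"
    have "upper_left n M \<in> WA z" using assms(5) zn M by force
    then have "upper_left n M $$ (i,j) = 0" unfolding WA_def using h by auto
    then show "M$$(i,j) = 0" using ul[of i j M] h by simp
  qed
  define I where "I = {k. 0 < k \<and> k < z}"
  have H: "M$$(0,i) * M$$(j,z) = M$$(0,j) * M$$(i,z)" if h: "M \<in> S" "i \<in> I" "j \<in> I" for M i j
  proof -
    have blk': "\<And>i j. 0<i \<Longrightarrow> i<n-1 \<Longrightarrow> 0<j \<Longrightarrow> j<n-1 \<Longrightarrow> M$$(i,j)=0"
      using blk[OF h(1)] zn by simp
    have rk: "vec_space.rank n M \<le> 2" using assms(4) h(1) by blast
    note pf = pf_cond[OF car[OF h(1)] sk[OF h(1)] dg[OF h(1)] blk' rk]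
    show ?thesis
    proof (cases i j rule: linorder_cases)
      case less
      then show ?thesis using pf[of i j] h zn unfolding I_def by simp
    next
      case equal
      then show ?thesis by simp
    next
      case greater
      then show ?thesis using pf[of j i] h zn unfolding I_def by simp
    qed
  qed
  have Iz: "\<And>k. k \<in> I \<Longrightarrow> k < n" unfolding I_def using z by auto
  have ULsub: "subspace class_ring (upper_left n ` S) (module_mat TYPE('a) (n-1) (n-1))"
  proof (rule subspace_image[OF assms(2)])
    show "\<And>A. A \<in> carrier_mat n n \<Longrightarrow> upper_left n A \<in> carrier_mat (n - 1) (n - 1)"
      unfolding upper_left_def by simp
    show "\<And>A B. A \<in> carrier_mat n n \<Longrightarrow> B \<in> carrier_mat n n \<Longrightarrow>
        upper_left n (A + B) = upper_left n A + upper_left n B"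
      unfolding upper_left_def by (rule eq_matI) auto
    show "\<And>c A. A \<in> carrier_mat n n \<Longrightarrow> upper_left n (c \<cdot>\<^sub>m A) = c \<cdot>\<^sub>m upper_left n A"
      unfolding upper_left_def by (rule eq_matI) auto
    show "upper_left n (0\<^sub>m n n) = (0\<^sub>m (n-1) (n-1) :: 'a mat)"
      unfolding upper_left_def by (rule eq_matI) auto
  qed
  have gen: "upper_left n N = t \<cdot>\<^sub>m upper_left n x0"
    if N: "N \<in> S" and x0: "x0 \<in> S" and t: "\<forall>k\<in>I. N$$(0,k) = t * x0$$(0,k)" for N x0 t
  proof (rule eq_matI)
    show "dim_row (upper_left n N) = dim_row (t \<cdot>\<^sub>m upper_left n x0)"
      "dim_col (upper_left n N) = dim_col (t \<cdot>\<^sub>m upper_left n x0)" unfolding upper_left_def by auto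
    fix i j assume "i < dim_row (t \<cdot>\<^sub>m upper_left n x0)" "j < dim_col (t \<cdot>\<^sub>m upper_left n x0)"
    then have i: "i < z" and j: "j < z" unfolding upper_left_def zn by auto
    have e: "(t \<cdot>\<^sub>m upper_left n x0) $$ (i,j) = t * x0 $$ (i,j)" using i j ul[OF i j] unfolding upper_left_def zn by simp
    show "upper_left n N $$ (i,j) = (t \<cdot>\<^sub>m upper_left n x0) $$ (i,j)"
      unfolding e ul[OF i j]
    proof (cases "i = 0")
      case True
      show "N $$ (i,j) = t * x0 $$ (i,j)"
      proof (cases "j = 0")
        case True
        then show ?thesis using \<open>i = 0\<close> dg[OF N, of 0] dg[OF x0, of 0] zz by simp
      next
        case False
        then have "j \<in> I" using j unfolding I_def by simp
        then show ?thesis using t \<open>i = 0\<close> by simp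
      qed
    next
      case False
      show "N $$ (i,j) = t * x0 $$ (i,j)"
      proof (cases "j = 0")
        case True
        then have "i \<in> I" using i False unfolding I_def by simp
        then have "N$$(0,i) = t * x0$$(0,i)" using t by simp
        moreover have "N$$(i,0) = - N$$(0,i)" "x0$$(i,0) = - x0$$(0,i)"
          using sk[OF N, of 0 i] sk[OF x0, of 0 i] i z by auto
        ultimately show ?thesis using True by simp
      next
        case F2: False
        then show ?thesis using blk[OF N, of i j] blk[OF x0, of i j] False i j by simp
      qed
    qed
  qed
  have D: "\<exists>x0\<in>S. \<exists>y0\<in>S. \<exists>i0\<in>I. \<exists>j0\<in>I. x0$$(0,i0) * y0$$(0,j0) \<noteq> x0$$(0,j0) * y0$$(0,i0)"
  proof (rule ccontr)
    assume "\<not> ?thesis"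
    then have nD: "\<And>x0 y0 i0 j0. x0 \<in> S \<Longrightarrow> y0 \<in> S \<Longrightarrow> i0 \<in> I \<Longrightarrow> j0 \<in> I \<Longrightarrow>
       x0$$(0,i0) * y0$$(0,j0) = x0$$(0,j0) * y0$$(0,i0)" by blast
    have "vectorspace.dim class_ring
           ((module_mat TYPE('a) (n - 1) (n - 1))\<lparr>carrier := upper_left n ` S\<rparr>) \<le> 1"
    proof (cases "\<exists>x0\<in>S. \<exists>k0\<in>I. x0$$(0,k0) \<noteq> 0")
      case True
      then obtain x0 k0 where x0: "x0 \<in> S" "k0 \<in> I" "x0$$(0,k0) \<noteq> 0" by blast
      show ?thesis
      proof (rule dim_le1[OF ULsub])
        show "upper_left n x0 \<in> upper_left n ` S" using x0 by blast
        fix w assume "w \<in> upper_left n ` S"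
        then obtain N where N: "N \<in> S" "w = upper_left n N" by blast
        have "\<forall>k\<in>I. N$$(0,k) = (N$$(0,k0) / x0$$(0,k0)) * x0$$(0,k)"
        proof
          fix k assume k: "k \<in> I"
          have "N$$(0,k) * x0$$(0,k0) = N$$(0,k0) * x0$$(0,k)" using nD[OF N(1) x0(1) k x0(2)] .
          then show "N$$(0,k) = (N$$(0,k0) / x0$$(0,k0)) * x0$$(0,k)" using x0(3)
            by (simp add: field_simps)
        qed
        then show "\<exists>t. w = t \<cdot>\<^sub>m upper_left n x0" using gen[OF N(1) x0(1)] N(2) by blast
      qed
    next
      case False
      show ?thesis
      proof (rule dim_le1[OF ULsub])
        show "upper_left n (0\<^sub>m n n) \<in> upper_left n ` S" using sf(4) by blast
        fix w assume "w \<in> upper_left n ` S"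
        then obtain N where N: "N \<in> S" "w = upper_left n N" by blast
        have "\<forall>k\<in>I. N$$(0,k) = 0 * (0\<^sub>m n n :: 'a mat)$$(0,k)" using False N by auto
        then show "\<exists>t. w = t \<cdot>\<^sub>m upper_left n (0\<^sub>m n n)" using gen[OF N(1) sf(4)] N(2) by blast
      qed
    qed
    then show False using assms(6) by simp
  qed
  then obtain x0 y0 i0 j0 where D': "x0 \<in> S" "y0 \<in> S" "i0 \<in> I" "j0 \<in> I"
    "x0$$(0,i0) * y0$$(0,j0) \<noteq> x0$$(0,j0) * y0$$(0,i0)" by blast
  have addS: "x + y \<in> S \<and> (\<forall>k\<in>I. (x + y)$$(0,k) = x$$(0,k) + y$$(0,k) \<and> (x + y)$$(k,z) = x$$(k,z) + y$$(k,z))"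
    if "x \<in> S" "y \<in> S" for x y
    using sf(2)[OF that] car[OF that(1)] car[OF that(2)] Iz zz by auto
  obtain l where l: "\<forall>x\<in>S. \<forall>k\<in>I. x$$(k,z) = l * x$$(0,k)"
    using key_lemma[of S "(+)" I "\<lambda>M k. M$$(0,k)" "\<lambda>M k. M$$(k,z)", OF addS H D'] by blast
  define T where "T = (\<lambda>M. Qm n l * M * (Qm n l)\<^sup>T) ` S"
  have Tsub: "subspace class_ring T (module_mat TYPE('a) n n)"
    unfolding T_def
    by (rule subspace_image[OF assms(2)]) (auto simp: conj_add conj_smult conj_zero n2)
  have TWA: "T \<subseteq> WA n"
  proof
    fix B assume "B \<in> T"
    then obtain M where M: "M \<in> S" and B: "B = Qm n l * M * (Qm n l)\<^sup>T" unfolding T_def by blast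
    have bl: "\<And>k. 0<k \<Longrightarrow> k<z \<Longrightarrow> M$$(k,z) = l * M$$(0,k)" using l M unfolding I_def by blast
    have skA: "\<forall>i<n. \<forall>j<n. M$$(j,i) = - M$$(i,j)" using sk[OF M] by blast
    have dgA: "\<forall>i<n. M$$(i,i) = 0" using dg[OF M] by blast
    have blkA: "\<forall>i j. 0<i \<longrightarrow> i<z \<longrightarrow> 0<j \<longrightarrow> j<z \<longrightarrow> M$$(i,j) = 0" using blk[OF M] by blast
    have blA: "\<forall>k. 0<k \<longrightarrow> k<z \<longrightarrow> M$$(k,z) = l * M$$(0,k)" using bl by blast
    note ce = conj_entries[OF car[OF M] n2 z skA dgA blkA blA]
    have Bc: "B \<in> carrier_mat n n" using B car[OF M] by simp
    have "transpose_mat B = - B"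
    proof (rule eq_matI)
      fix i j assume "i < dim_row (- B)" "j < dim_col (- B)"
      then have i: "i < n" and j: "j < n" using Bc by auto
      show "transpose_mat B $$ (i,j) = (- B) $$ (i,j)" using ce(1)[OF i j] i j Bc B by simp
    qed (use Bc in auto)
    moreover have "\<forall>i<n. B $$ (i,i) = 0" using ce(2) B by blast
    moreover have "\<forall>i<n. \<forall>j<n. 0 < i \<longrightarrow> 0 < j \<longrightarrow> B $$ (i,j) = 0" using ce(3) B by blast
    ultimately show "B \<in> WA n" unfolding WA_def alt_mat_def using Bc by blast
  qed
  have cong: "congruent_sets n S T"
    unfolding congruent_sets_def
  proof (intro bexI[of _ "Qm n (-l)"] conjI)
    show "invertible_mat (Qm n (-l))" using Qm_invertible[OF n2] .
    show "Qm n (-l) \<in> carrier_mat n n" by simp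
    have "(\<lambda>M. Qm n (-l) * M * (Qm n (-l))\<^sup>T) ` T = (\<lambda>M. Qm n (-l) * (Qm n l * M * (Qm n l)\<^sup>T) * (Qm n (-l))\<^sup>T) ` S"
      unfolding T_def image_image ..
    also have "\<dots> = (\<lambda>M. M) ` S" by (rule image_cong) (auto simp: conj_inv car n2)
    finally show "S = (\<lambda>M. Qm n (-l) * M * (Qm n (-l))\<^sup>T) ` T" by simp
  qed
  show ?thesis using Tsub TWA cong by blast
qed


end
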